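(* Let $\mathcal H$ be a real Hilbert space, $k\ge1$, and let $\mathbf{x}_1,\ldots,\mathbf{x}_k\in\mathcal H$ be norm one vectors with $\dim(\operatorname{span}\{\mathbf{x}_1,\ldots,\mathbf{x}_k\})\le 2$. Then there is a nonzero continuous symmetric $k$-linear form $T$ on $\mathcal H$ attaining its norm at $(\mathbf{x}_1,\ldots,\mathbf{x}_k)$.
   Context: $\|T\|=\sup\{|T(\mathbf{w}_1,\ldots,\mathbf{w}_k)|:\|\mathbf{w}_i\|\le1\}$, and $T$ attains its norm at $(\mathbf{x}_1,\ldots,\mathbf{x}_k)$ if $|T(\mathbf{x}_1,\ldots,\mathbf{x}_k)|=\|T\|$. *)

theory Defs
  imports "HOL-Analysis.Analysis"
begin

text \<open>A k-linear form on a real vector space V is modelled as a function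
  T :: (nat \<Rightarrow> V) \<Rightarrow> real that only depends on the first k arguments
  w 0, ..., w (k-1) and is linear in each of them separately.\<close>

definition multilinear_form :: "nat \<Rightarrow> ((nat \<Rightarrow> 'a::real_vector) \<Rightarrow> real) \<Rightarrow> bool" where
  "multilinear_form k T \<longleftrightarrow>
     (\<forall>w w'. (\<forall>i<k. w i = w' i) \<longrightarrow> T w = T w') \<and>
     (\<forall>i<k. \<forall>w. linear (\<lambda>v. T (w(i := v))))"

text \<open>Continuity of a multilinear form (equivalently, boundedness).\<close>
definition bounded_mform :: "nat \<Rightarrow> ((nat \<Rightarrow> 'a::real_normed_vector) \<Rightarrow> real) \<Rightarrow> bool" where
  "bounded_mform k T \<longleftrightarrow> (\<exists>C. \<forall>w. \<bar>T w\<bar> \<le> C * (\<Prod>i<k. norm (w i)))"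

definition symmetric_mform :: "nat \<Rightarrow> ((nat \<Rightarrow> 'a) \<Rightarrow> real) \<Rightarrow> bool" where
  "symmetric_mform k T \<longleftrightarrow> (\<forall>\<sigma> w. \<sigma> permutes {..<k} \<longrightarrow> T (w \<circ> \<sigma>) = T w)"

definition mform_norm :: "nat \<Rightarrow> ((nat \<Rightarrow> 'a::real_normed_vector) \<Rightarrow> real) \<Rightarrow> real" where
  "mform_norm k T = Sup {\<bar>T w\<bar> | w. \<forall>i<k. norm (w i) \<le> 1}"

definition attains_norm_at :: "nat \<Rightarrow> ((nat \<Rightarrow> 'a::real_normed_vector) \<Rightarrow> real) \<Rightarrow> (nat \<Rightarrow> 'a) \<Rightarrow> bool" where
  "attains_norm_at k T x \<longleftrightarrow> \<bar>T x\<bar> = mform_norm k T"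

end

theory Submission
  imports Defs
begin

lemma bessel2:
  fixes e1 e2 w :: "'a::real_inner"
  assumes "norm e1 = 1" "e1 \<bullet> e2 = 0" "e2 = 0 \<or> norm e2 = 1"
  shows "(w \<bullet> e1)^2 + (w \<bullet> e2)^2 \<le> (norm w)^2"
proof -
  define a where "a = w \<bullet> e1"
  define b where "b = w \<bullet> e2"
  have e11: "e1 \<bullet> e1 = 1" using assms(1) by (simp add: dot_square_norm)
  have e22: "b^2 * (e2 \<bullet> e2) = b^2"
    using assms(3) b_def by (auto simp: dot_square_norm)
  have "0 \<le> (w - a *\<^sub>R e1 - b *\<^sub>R e2) \<bullet> (w - a *\<^sub>R e1 - b *\<^sub>R e2)" by simp
  also have "\<dots> = w \<bullet> w - 2*a*(w \<bullet> e1) - 2*b*(w\<bullet>e2) + a^2*(e1\<bullet>e1) + b^2*(e2\<bullet>e2) + 2*a*b*(e1\<bullet>e2)"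
    by (simp add: algebra_simps inner_commute power2_eq_square)
  also have "\<dots> = w \<bullet> w - a^2 - b^2"
    using e11 e22 assms(2) a_def b_def by (simp add: power2_eq_square)
  finally show ?thesis by (simp add: a_def b_def dot_square_norm)
qed

lemma in_span2:
  fixes e1 e2 y :: "'a::real_inner"
  assumes "norm e1 = 1" "e1 \<bullet> e2 = 0" "e2 = 0 \<or> norm e2 = 1" "y \<in> span {e1, e2}"
  shows "(y \<bullet> e1)^2 + (y \<bullet> e2)^2 = (norm y)^2"
proof -
  obtain a b where y: "y = a *\<^sub>R e1 + b *\<^sub>R e2"
    using assms(4) unfolding span_insert span_singleton
    by (auto simp: algebra_simps)
  have e11: "e1 \<bullet> e1 = 1" using assms(1) by (simp add: dot_square_norm)
  have "e2 \<bullet> e2 = 0 \<or> e2 \<bullet> e2 = 1" using assms(3) by (auto simp: dot_square_norm)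
  have n: "(norm y)^2 = y \<bullet> y" by (simp add: dot_square_norm)
  show ?thesis using assms(2) e11 \<open>e2 \<bullet> e2 = 0 \<or> e2 \<bullet> e2 = 1\<close> unfolding n unfolding y
    by (auto simp: inner_add_left inner_add_right inner_commute power2_eq_square)
qed


lemma construct:
  fixes e1 e2 :: "'a::real_inner" and x :: "nat \<Rightarrow> 'a"
  assumes "norm e1 = 1" "e1 \<bullet> e2 = 0" "e2 = 0 \<or> norm e2 = 1"
    and xs: "\<forall>i<k. x i \<in> span {e1, e2}" and xn: "\<forall>i<k. norm (x i) = 1"
  shows "\<exists>T :: (nat \<Rightarrow> 'a) \<Rightarrow> real.
           multilinear_form k T \<and> bounded_mform k T \<and> symmetric_mform k T \<and>
           T \<noteq> (\<lambda>w. 0) \<and> attains_norm_at k T x"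
proof -
  define L where "L w = Complex (w \<bullet> e1) (w \<bullet> e2)" for w
  have Lle: "cmod (L w) \<le> norm w" for w
  proof -
    have "(cmod (L w))^2 \<le> (norm w)^2"
      using bessel2[OF assms(1-3), of w] by (simp add: L_def cmod_def)
    then show ?thesis by (rule power2_le_imp_le) simp
  qed
  have Lx: "cmod (L (x i)) = 1" if "i < k" for i
  proof -
    have "(cmod (L (x i)))^2 = 1"
      using in_span2[OF assms(1-3), of "x i"] xs xn that by (simp add: L_def cmod_def)
    then show ?thesis using norm_ge_zero[of "L (x i)"] by (auto simp: power2_eq_1_iff)
  qed
  define z where "z = (\<Prod>i<k. L (x i))"
  have z1: "cmod z = 1" using Lx by (simp add: z_def prod_norm[symmetric])
  define T where "T w = Re (cnj z * (\<Prod>i<k. L (w i)))" for w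
  have Tx: "T x = 1"
  proof -
    have "cnj z * z = complex_of_real ((cmod z)^2)" using complex_norm_square[of z] by (simp only: mult.commute)
    then show ?thesis using z1 by (simp add: T_def z_def[symmetric])
  qed
  have Tb: "\<bar>T w\<bar> \<le> (\<Prod>i<k. norm (w i))" for w
  proof -
    have "\<bar>T w\<bar> \<le> cmod (cnj z * (\<Prod>i<k. L (w i)))" unfolding T_def by (rule abs_Re_le_cmod)
    also have "\<dots> = (\<Prod>i<k. cmod (L (w i)))" using z1 by (simp add: norm_mult prod_norm[symmetric])
    also have "\<dots> \<le> (\<Prod>i<k. norm (w i))" by (rule prod_mono) (simp add: Lle)
    finally show ?thesis .
  qed
  have ml: "multilinear_form k T"
    unfolding multilinear_form_def
  proof (intro conjI allI impI)
    fix w w' :: "nat \<Rightarrow> 'a" assume "\<forall>i<k. w i = w' i"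
    then show "T w = T w'" unfolding T_def by (metis lessThan_iff prod.cong)
  next
    fix i w assume i: "i < k"
    define P where "P = cnj z * (\<Prod>j\<in>{..<k}-{i}. L (w j))"
    have eq: "T (w(i := v)) = Re P * (v \<bullet> e1) - Im P * (v \<bullet> e2)" for v
    proof -
      have "(\<Prod>j<k. L ((w(i := v)) j)) = L v * (\<Prod>j\<in>{..<k}-{i}. L ((w(i := v)) j))"
        using i by (subst prod.remove[of _ i]) auto
      also have "(\<Prod>j\<in>{..<k}-{i}. L ((w(i := v)) j)) = (\<Prod>j\<in>{..<k}-{i}. L (w j))"
        by (rule prod.cong) auto
      finally have "cnj z * (\<Prod>j<k. L ((w(i := v)) j)) = P * L v" by (simp add: P_def mult_ac)
      then show ?thesis by (simp add: T_def L_def)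
    qed
    show "linear (\<lambda>v. T (w(i := v)))"
      unfolding eq by (intro linearI) (simp_all add: inner_add_left algebra_simps)
  qed
  have sym: "symmetric_mform k T"
    unfolding symmetric_mform_def T_def
  proof (intro allI impI)
    fix \<sigma> and w :: "nat \<Rightarrow> 'a" assume "\<sigma> permutes {..<k}"
    then have "(\<Prod>i<k. L (w i)) = (\<Prod>i<k. L ((w \<circ> \<sigma>) i))"
      by (subst prod.permute[of \<sigma>]) (auto simp: comp_def)
    then show "Re (cnj z * (\<Prod>i<k. L ((w \<circ> \<sigma>) i))) = Re (cnj z * (\<Prod>i<k. L (w i)))" by simp
  qed
  have bd: "bounded_mform k T"
    unfolding bounded_mform_def by (rule exI[of _ 1]) (simp add: Tb)
  have nrm: "mform_norm k T = 1"
    unfolding mform_norm_def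
  proof (rule cSup_eq_maximum)
    show "1 \<in> {\<bar>T w\<bar> |w. \<forall>i<k. norm (w i) \<le> 1}"
      using Tx xn by (auto intro!: exI[of _ x])
  next
    fix y assume "y \<in> {\<bar>T w\<bar> |w. \<forall>i<k. norm (w i) \<le> 1}"
    then obtain w where y: "y = \<bar>T w\<bar>" and w: "\<forall>i<k. norm (w i) \<le> 1" by blast
    have "(\<Prod>i<k. norm (w i)) \<le> (\<Prod>i<k. (1::real))"
      by (rule prod_mono) (simp add: w)
    then show "y \<le> 1" using Tb[of w] y by simp
  qed
  have "T \<noteq> (\<lambda>w. 0)" using Tx by auto
  moreover have "attains_norm_at k T x" unfolding attains_norm_at_def using nrm Tx by simp
  ultimately show ?thesis using ml bd sym by blast
qed


theorem proposition4p3: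
  fixes x :: "nat \<Rightarrow> 'a::{real_inner, complete_space}" and k :: nat
  assumes "k \<ge> 1"
    and "\<forall>i<k. norm (x i) = 1"
    and "dim (span (x ` {..<k})) \<le> 2"
  shows "\<exists>T :: (nat \<Rightarrow> 'a) \<Rightarrow> real.
           multilinear_form k T \<and> bounded_mform k T \<and> symmetric_mform k T \<and>
           T \<noteq> (\<lambda>w. 0) \<and> attains_norm_at k T x"
proof -
  define V where "V = span (x ` {..<k})"
  have n0: "norm (x 0) = 1" using assms(1,2) by simp
  have x00: "x 0 \<noteq> 0" using n0 by auto
  show ?thesis
  proof (cases "\<forall>i<k. x i \<in> span {x 0}")
    case True
    have "\<forall>i<k. x i \<in> span {x 0, 0}"
      using True span_mono[of "{x 0}" "{x 0, 0}"] by blast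
    then show ?thesis by (intro construct[of "x 0" 0]) (use n0 assms(2) in auto)
  next
    case False
    then obtain j where j: "j < k" "x j \<notin> span {x 0}" by blast
    define v where "v = x j - (x j \<bullet> x 0) *\<^sub>R x 0"
    have v0: "v \<noteq> 0"
    proof
      assume "v = 0"
      then have "x j = (x j \<bullet> x 0) *\<^sub>R x 0" by (simp add: v_def)
      then have "x j \<in> span {x 0}" by (metis span_base span_scale singletonI)
      then show False using j by simp
    qed
    define e2 where "e2 = v /\<^sub>R norm v"
    have e2n: "norm e2 = 1" using v0 by (simp add: e2_def)
    have x0x0: "x 0 \<bullet> x 0 = 1" using n0 by (simp add: dot_square_norm)
    have orth: "x 0 \<bullet> e2 = 0"
      by (simp add: e2_def v_def inner_diff_right x0x0 inner_commute)
    have xj_eq: "x j = (x j \<bullet> x 0) *\<^sub>R x 0 + norm v *\<^sub>R e2"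
      using v0 by (simp add: e2_def v_def)
    define B0 where "B0 = {x j, x 0}"
    have xjne: "x j \<noteq> x 0" using j span_base[of "x 0" "{x 0}"] by auto
    have indB0: "independent B0"
      unfolding B0_def using j xjne x00
      by (simp add: independent_insert)
    have B0V: "B0 \<subseteq> V" using j assms(1) unfolding B0_def V_def by (auto intro: span_base)
    obtain B where B: "B0 \<subseteq> B" "B \<subseteq> V" "independent B" "V \<subseteq> span B"
      using maximal_independent_subset_extend[OF B0V indB0] by blast
    have cB: "card B = dim V" using basis_card_eq_dim[OF B(2,4,3)] .
    have "finite B" using independent_span_bound[of "x ` {..<k}" B] B(2,3) unfolding V_def by auto
    moreover have "card B0 = 2" using xjne unfolding B0_def by simp
    moreover have "dim V \<le> 2" using assms(3) unfolding V_def .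
    ultimately have "B = B0" using B(1) cB card_seteq[of B B0] by simp
    then have VB0: "V \<subseteq> span B0" using B(4) by simp
    have "span B0 \<subseteq> span {x 0, e2}"
    proof (rule span_minimal)
      show "B0 \<subseteq> span {x 0, e2}"
      proof -
        have a: "x 0 \<in> span {x 0, e2}" by (simp add: span_base)
        have b: "e2 \<in> span {x 0, e2}" by (simp add: span_base)
        have "x j \<in> span {x 0, e2}"
          by (subst xj_eq) (intro span_add span_scale a b)
        then show ?thesis using a unfolding B0_def by simp
      qed
    qed (rule subspace_span)
    then have "\<forall>i<k. x i \<in> span {x 0, e2}"
      using VB0 unfolding V_def by (auto intro: span_base)
    then show ?thesis
      by (intro construct[of "x 0" e2]) (use n0 e2n orth assms(2) in auto)
  qed
qed

end
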